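(* Let $(X_n,\eta_n)$ be a time-homogeneous Markov chain on a locally finite set $\Sigma\subseteq\mathbb{R}_+\times S$ ($S$ finite). Suppose that for some $p>2$ there is $C_p<\infty$ with $\mathbb{E}_{x,i}[|X_{n+1}-X_n|^p]\le C_p$ for all $(x,i)\in\Sigma$, and suppose there exist $c_i\in\mathbb{R}$, $s_i^2\ge0$ (at least one $s_i^2\ne0$) with $\mu_i(x)=c_i/x+o(x^{-1})$ and $\sigma_i^2(x)=s_i^2+o(1)$ as $x\to\infty$. Let $\zeta\in(\frac1{p-1},1)$ and $E_n=\{|X_{n+1}-X_n|\le X_n^\zeta\}$. Then for any $r\in\mathbb{R}$, as $x\to\infty$, \[\mathbb{E}_{x,i}[(X_{n+1}^r-X_n^r)\mathbf 1(E_n)]=rx^{r-2}\Big(c_i+\frac{r-1}2s_i^2+o(1)\Big).\]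
   Context: $\mathbb{E}_{x,i}[\cdot]=\mathbb{E}[\cdot\mid X_n=x,\eta_n=i]$; $\mu_i(x)=\mathbb{E}_{x,i}[X_{n+1}-X_n]$; $\sigma_i^2(x)=\mathbb{E}_{x,i}[(X_{n+1}-X_n)^2]$. *)

theory Defs
  imports "HOL-Probability.Probability"
begin

text \<open>The time-homogeneous Markov chain (X_n, eta_n) on Sigma is represented by its
one-step transition kernel K: K (x,i) is the law of (X_{n+1}, eta_{n+1}) given
X_n = x, eta_n = i. Since Sigma is locally finite it is countable, so the kernel is
a discrete distribution (pmf).\<close>

definition locally_finite_state_space :: "(real \<times> 's) set \<Rightarrow> bool" where
  "locally_finite_state_space \<Sigma> \<longleftrightarrow>
     (\<forall>z\<in>\<Sigma>. fst z \<ge> 0) \<and> (\<forall>b::real. finite {z\<in>\<Sigma>. fst z \<le> b})"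

definition mu :: "(real \<times> 's \<Rightarrow> (real \<times> 's) pmf) \<Rightarrow> 's \<Rightarrow> real \<Rightarrow> real" where
  "mu K i x = measure_pmf.expectation (K (x, i)) (\<lambda>y. fst y - x)"

definition sigma2 :: "(real \<times> 's \<Rightarrow> (real \<times> 's) pmf) \<Rightarrow> 's \<Rightarrow> real \<Rightarrow> real" where
  "sigma2 K i x = measure_pmf.expectation (K (x, i)) (\<lambda>y. (fst y - x)^2)"

end

theory Submission
  imports Defs
begin


lemma powr_ratio_bound:
  fixes x t a :: real
  assumes "x > 0" "x/2 \<le> t" "t \<le> 2*x"
  shows "t powr a \<le> 2 powr \<bar>a\<bar> * x powr a"
proof -
  have t0: "t > 0" using assms by linarith
  have "t powr a = (t/x) powr a * x powr a"
    using assms t0 by (simp add: powr_divide)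
  moreover have "(t/x) powr a \<le> 2 powr \<bar>a\<bar>"
  proof (cases "a \<ge> 0")
    case True
    have "t/x \<le> 2" using assms by (simp add: divide_le_eq)
    hence "(t/x) powr a \<le> 2 powr a" using True t0 assms by (intro powr_mono2) auto
    thus ?thesis using True by simp
  next
    case False
    have "(t/x) powr a = (x/t) powr (-a)" using t0 assms
      by (simp add: powr_minus_divide powr_divide)
    also have "x/t \<le> 2" using assms t0 by (simp add: divide_le_eq)
    hence "(x/t) powr (-a) \<le> 2 powr (-a)" using False t0 assms by (intro powr_mono2) auto
    finally show ?thesis using False by simp
  qed
  ultimately show ?thesis using assms by (simp add: mult_right_mono)
qed

lemma taylor_powr:
  fixes x y r :: real
  assumes x: "x > 0" and y1: "x/2 \<le> y" and y2: "y \<le> 2*x"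
  shows "\<bar>y powr r - x powr r - r * x powr (r-1) * (y-x) - r*(r-1)/2 * x powr (r-2) * (y-x)^2\<bar>
     \<le> \<bar>r*(r-1)*(r-2)\<bar>/6 * 2 powr \<bar>r-3\<bar> * x powr (r-3) * \<bar>y-x\<bar>^3"
proof (cases "y = x")
  case True thus ?thesis by simp
next
  case False
  define diff where "diff = (\<lambda>m::nat. \<lambda>t::real. (\<Prod>k<m. (r - real k)) * t powr (r - real m))"
  have D: "\<forall>m t. m < 3 \<and> x/2 \<le> t \<and> t \<le> 2*x \<longrightarrow> DERIV (diff m) t :> diff (Suc m) t"
  proof (intro allI impI)
    fix m :: nat and t :: real assume h: "m < 3 \<and> x/2 \<le> t \<and> t \<le> 2*x"
    hence t0: "t > 0" using x by linarith
    have "DERIV (\<lambda>t. (\<Prod>k<m. (r - real k)) * t powr (r - real m)) t :>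
        (\<Prod>k<m. (r - real k)) * ((r - real m) * t powr (r - real m - 1))"
      by (intro DERIV_cmult has_real_derivative_powr t0)
    thus "DERIV (diff m) t :> diff (Suc m) t"
      unfolding diff_def by (simp add: algebra_simps diff_diff_eq)
  qed
  have "diff 0 = (\<lambda>t. t powr r)" unfolding diff_def by simp
  from Taylor[of 3 diff "\<lambda>t. t powr r" "x/2" "2*x" x y, OF _ this D] x y1 y2 False
  obtain t where t: "(if y < x then y < t \<and> t < x else x < t \<and> t < y)"
    and eq: "y powr r = (\<Sum>m<3. (diff m x / fact m) * (y - x)^m) + (diff 3 t / fact 3) * (y - x)^3"
    by auto
  have tb: "x/2 \<le> t" "t \<le> 2*x" using t y1 y2 by (auto split: if_splits)
  have s: "(\<Sum>m<3. (diff m x / fact m) * (y - x)^m) = x powr r + r * x powr (r-1) * (y-x) + r*(r-1)/2 * x powr (r-2) * (y-x)^2"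
    by (simp add: diff_def numeral_3_eq_3 lessThan_Suc eval_nat_numeral fact_numeral)
  have d3: "diff 3 t / fact 3 = r*(r-1)*(r-2)/6 * t powr (r-3)"
    by (simp add: diff_def numeral_3_eq_3 lessThan_Suc eval_nat_numeral fact_numeral)
  have "\<bar>y powr r - x powr r - r * x powr (r-1) * (y-x) - r*(r-1)/2 * x powr (r-2) * (y-x)^2\<bar>
     = \<bar>r*(r-1)*(r-2)\<bar>/6 * t powr (r-3) * \<bar>y-x\<bar>^3"
    using eq s d3 by (simp add: abs_mult power_abs)
  also have "\<dots> \<le> \<bar>r*(r-1)*(r-2)\<bar>/6 * (2 powr \<bar>r-3\<bar> * x powr (r-3)) * \<bar>y-x\<bar>^3"
    using powr_ratio_bound[OF x tb] by (intro mult_right_mono mult_left_mono) auto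
  finally show ?thesis by (simp add: mult.assoc)
qed


lemma pw1: fixes d p :: real assumes "p \<ge> 1" shows "\<bar>d\<bar> \<le> 1 + \<bar>d\<bar> powr p"
proof (cases "\<bar>d\<bar> \<le> 1")
  case True thus ?thesis by (smt (verit) powr_ge_zero)
next
  case False
  hence "\<bar>d\<bar> powr 1 \<le> \<bar>d\<bar> powr p" using assms by (intro powr_mono) auto
  thus ?thesis using False by simp
qed

lemma pw2: fixes d p :: real assumes "p \<ge> 2" shows "d^2 \<le> 1 + \<bar>d\<bar> powr p"
proof (cases "\<bar>d\<bar> \<le> 1")
  case True
  hence "d^2 \<le> 1" by (simp add: abs_le_square_iff power_le_one abs_square_le_1)
  thus ?thesis by (smt (verit) powr_ge_zero)
next
  case False
  hence "\<bar>d\<bar> powr 2 \<le> \<bar>d\<bar> powr p" using assms by (intro powr_mono) auto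
  moreover have "\<bar>d\<bar> powr 2 = d^2" using False by (simp add: powr_numeral)
  ultimately show ?thesis by (smt (verit) powr_ge_zero)
qed

lemma pw3: fixes d p a q :: real assumes "q \<le> p" "a > 0" "\<bar>d\<bar> > a" "q \<ge> 0"
  shows "\<bar>d\<bar> powr q \<le> a powr (q - p) * \<bar>d\<bar> powr p"
proof -
  have d0: "\<bar>d\<bar> > 0" using assms by linarith
  have "\<bar>d\<bar> powr p = \<bar>d\<bar> powr q * \<bar>d\<bar> powr (p - q)" by (simp add: powr_add[symmetric])
  moreover have "a powr (p - q) \<le> \<bar>d\<bar> powr (p-q)" using assms by (intro powr_mono2) auto
  ultimately have "\<bar>d\<bar> powr p \<ge> \<bar>d\<bar> powr q * a powr (p - q)"
    by (simp add: mult_left_mono)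
  hence "a powr (q - p) * \<bar>d\<bar> powr p \<ge> a powr (q-p) * (\<bar>d\<bar> powr q * a powr (p - q))"
    by (simp add: mult_left_mono)
  also have "a powr (q-p) * (\<bar>d\<bar> powr q * a powr (p - q)) = \<bar>d\<bar> powr q"
    using assms by (simp add: powr_add[symmetric])
  finally show ?thesis .
qed



lemma int_abs_le:
  fixes f g :: "'a \<Rightarrow> real"
  assumes "integrable M f" "integrable M g" "\<And>y. \<bar>f y\<bar> \<le> g y"
  shows "\<bar>integral\<^sup>L M f\<bar> \<le> integral\<^sup>L M g"
proof -
  have "\<bar>integral\<^sup>L M f\<bar> \<le> integral\<^sup>L M (\<lambda>y. \<bar>f y\<bar>)"
    using integral_norm_bound[of M f] by simp
  also have "\<dots> \<le> integral\<^sup>L M g"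
    using assms by (intro integral_mono) auto
  finally show ?thesis .
qed

lemma tri5: fixes t1 t2 t3 t4 t5 :: real
  shows "\<bar>t1 - t2 + t3 - t4 + t5\<bar> \<le> \<bar>t1\<bar> + \<bar>t2\<bar> + \<bar>t3\<bar> + \<bar>t4\<bar> + \<bar>t5\<bar>"
  by linarith

lemma core:
  fixes q :: "'a pmf" and Y :: "'a \<Rightarrow> real" and x a p C r c s :: real
  assumes x: "x > 0" and a: "a > 0" "a \<le> x/2" and p: "p > 2"
    and intp: "integrable q (\<lambda>y. \<bar>Y y - x\<bar> powr p)"
    and bnd: "measure_pmf.expectation q (\<lambda>y. \<bar>Y y - x\<bar> powr p) \<le> C"
  shows "\<bar>measure_pmf.expectation q (\<lambda>y. if \<bar>Y y - x\<bar> \<le> a then Y y powr r - x powr r else 0)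
      - r * x powr (r-2) * (c + (r-1)/2 * s)\<bar>
   \<le> \<bar>r\<bar> * x powr (r-2) * (x * \<bar>measure_pmf.expectation q (\<lambda>y. Y y - x) - c/x\<bar>
        + x * a powr (1-p) * C + \<bar>r-1\<bar>/2 * \<bar>measure_pmf.expectation q (\<lambda>y. (Y y - x)^2) - s\<bar>
        + \<bar>r-1\<bar>/2 * a powr (2-p) * C
        + (\<bar>(r-1)*(r-2)\<bar>/6 * 2 powr \<bar>r-3\<bar>) * (1 + C) * (a/x))"
proof -
  define d where "d = (\<lambda>y. Y y - x)"
  define I where "I = (\<lambda>y. if \<bar>d y\<bar> \<le> a then 1 else (0::real))"
  define B where "B = \<bar>(r-1)*(r-2)\<bar>/6 * 2 powr \<bar>r-3\<bar>"
  define X2 where "X2 = x powr (r-2)"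
  define R where "R = (\<lambda>y. if \<bar>d y\<bar> \<le> a then Y y powr r - x powr r - r * x powr (r-1) * d y
        - r*(r-1)/2 * X2 * (d y)^2 else 0)"
  define P where "P = (\<lambda>y. \<bar>d y\<bar> powr p)"
  have X1: "x powr (r-1) = x * X2"
  proof -
    have "x powr (1 + (r-2)) = x powr 1 * x powr (r-2)" by (rule powr_add)
    thus ?thesis unfolding X2_def using x by simp
  qed
  have X3: "x powr (r-3) = X2 / x"
  proof -
    have "x powr ((r-2) - 1) = x powr (r-2) / x powr 1" by (rule powr_diff)
    thus ?thesis unfolding X2_def using x by (simp add: diff_diff_eq)
  qed
  have X2pos: "X2 > 0" unfolding X2_def using x by simp
  have intP: "integrable q P" using intp unfolding P_def d_def .
  have Pnn: "\<And>y. P y \<ge> 0" unfolding P_def by simp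
  have EP: "measure_pmf.expectation q P \<le> C" using bnd unfolding P_def d_def .
  have EP0: "0 \<le> measure_pmf.expectation q P" by (rule integral_nonneg_AE) (simp add: Pnn)
  hence C0: "C \<ge> 0" using EP by linarith
  have int1: "integrable q (\<lambda>y. 1 + P y)" using intP by simp
  have intd: "integrable q d"
  proof (rule Bochner_Integration.integrable_bound[OF int1])
    show "AE y in q. norm (d y) \<le> norm (1 + P y)"
    proof (intro AE_I2)
      fix y
      have "\<bar>d y\<bar> \<le> 1 + P y" unfolding P_def using pw1[of p "d y"] p by simp
      thus "norm (d y) \<le> norm (1 + P y)" using Pnn[of y] by simp
    qed
  qed simp
  have intd2: "integrable q (\<lambda>y. (d y)^2)"
  proof (rule Bochner_Integration.integrable_bound[OF int1])
    show "AE y in q. norm ((d y)^2) \<le> norm (1 + P y)"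
    proof (intro AE_I2)
      fix y
      have "(d y)^2 \<le> 1 + P y" unfolding P_def using pw2[of p "d y"] p by simp
      thus "norm ((d y)^2) \<le> norm (1 + P y)" using Pnn[of y] by simp
    qed
  qed simp
  have I01: "\<And>y. I y = 0 \<or> I y = 1" unfolding I_def by auto
  have intdI: "integrable q (\<lambda>y. d y * I y)"
  proof (rule Bochner_Integration.integrable_bound[OF intd])
    show "AE y in q. norm (d y * I y) \<le> norm (d y)"
      using I01 by (intro AE_I2) (metis mult_zero_right mult_cancel_left1 norm_zero norm_ge_zero order_refl)
  qed simp
  have intd2I: "integrable q (\<lambda>y. (d y)^2 * I y)"
  proof (rule Bochner_Integration.integrable_bound[OF intd2])
    show "AE y in q. norm ((d y)^2 * I y) \<le> norm ((d y)^2)"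
      using I01 by (intro AE_I2) (metis mult_zero_right mult_cancel_left1 norm_zero norm_ge_zero order_refl)
  qed simp
  have intcP: "\<And>k. integrable q (\<lambda>y. k * P y)" using intP by simp
  have intc1P: "\<And>k. integrable q (\<lambda>y. k * (1 + P y))" using int1 by simp
  have e1: "\<bar>measure_pmf.expectation q (\<lambda>y. d y - d y * I y)\<bar> \<le> a powr (1-p) * C"
  proof -
    have "\<bar>measure_pmf.expectation q (\<lambda>y. d y - d y * I y)\<bar>
        \<le> measure_pmf.expectation q (\<lambda>y. a powr (1-p) * P y)"
    proof (rule int_abs_le)
      show "integrable q (\<lambda>y. d y - d y * I y)" using intd intdI by simp
      show "integrable q (\<lambda>y. a powr (1-p) * P y)" by (rule intcP)
      fix y show "\<bar>d y - d y * I y\<bar> \<le> a powr (1-p) * P y"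
      proof (cases "\<bar>d y\<bar> \<le> a")
        case True thus ?thesis using Pnn[of y] by (simp add: I_def)
      next
        case False
        hence "\<bar>d y\<bar> powr 1 \<le> a powr (1-p) * \<bar>d y\<bar> powr p" using a p by (intro pw3) auto
        thus ?thesis using False a by (simp add: I_def P_def)
      qed
    qed
    also have "\<dots> = a powr (1-p) * measure_pmf.expectation q P" by simp
    also have "\<dots> \<le> a powr (1-p) * C" using EP by (intro mult_left_mono) auto
    finally show ?thesis .
  qed
  have e2: "\<bar>measure_pmf.expectation q (\<lambda>y. (d y)^2 - (d y)^2 * I y)\<bar> \<le> a powr (2-p) * C"
  proof -
    have "\<bar>measure_pmf.expectation q (\<lambda>y. (d y)^2 - (d y)^2 * I y)\<bar>
        \<le> measure_pmf.expectation q (\<lambda>y. a powr (2-p) * P y)"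
    proof (rule int_abs_le)
      show "integrable q (\<lambda>y. (d y)^2 - (d y)^2 * I y)" using intd2 intd2I by simp
      show "integrable q (\<lambda>y. a powr (2-p) * P y)" by (rule intcP)
      fix y show "\<bar>(d y)^2 - (d y)^2 * I y\<bar> \<le> a powr (2-p) * P y"
      proof (cases "\<bar>d y\<bar> \<le> a")
        case True thus ?thesis using Pnn[of y] by (simp add: I_def)
      next
        case False
        hence "\<bar>d y\<bar> powr 2 \<le> a powr (2-p) * \<bar>d y\<bar> powr p" using a p by (intro pw3) auto
        moreover have "\<bar>d y\<bar> powr 2 = (d y)^2" using False a by (simp add: powr_numeral)
        ultimately show ?thesis using False a by (simp add: I_def P_def)
      qed
    qed
    also have "\<dots> = a powr (2-p) * measure_pmf.expectation q P" by simp
    also have "\<dots> \<le> a powr (2-p) * C" using EP by (intro mult_left_mono) auto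
    finally show ?thesis .
  qed
  define K where "K = \<bar>r\<bar> * B * (X2/x) * a"
  have K0: "K \<ge> 0" unfolding K_def B_def using X2pos x a by simp
  have Rb: "\<And>y. \<bar>R y\<bar> \<le> K * (1 + P y)"
  proof -
    fix y show "\<bar>R y\<bar> \<le> K * (1 + P y)"
    proof (cases "\<bar>d y\<bar> \<le> a")
      case False thus ?thesis using K0 Pnn[of y] by (simp add: R_def)
    next
      case True
      have y1: "x/2 \<le> Y y" "Y y \<le> 2*x" using True a x unfolding d_def by auto
      have "\<bar>R y\<bar> \<le> \<bar>r*(r-1)*(r-2)\<bar>/6 * 2 powr \<bar>r-3\<bar> * x powr (r-3) * \<bar>Y y - x\<bar>^3"
        using taylor_powr[OF x y1, of r] True unfolding R_def d_def X2_def by simp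
      also have "\<dots> = \<bar>r\<bar> * B * (X2/x) * (\<bar>d y\<bar> * (d y)^2)"
        unfolding B_def X3 d_def by (simp add: abs_mult power_abs power3_eq_cube power2_eq_square)
      also have "\<dots> \<le> \<bar>r\<bar> * B * (X2/x) * (a * (1 + P y))"
      proof (intro mult_left_mono mult_mono)
        show "(d y)^2 \<le> 1 + P y" unfolding P_def using pw2[of p "d y"] p by simp
      qed (use True X2pos x Pnn[of y] in \<open>auto simp: B_def\<close>)
      finally show ?thesis unfolding K_def by (simp add: mult.assoc)
    qed
  qed
  have intR: "integrable q R"
  proof (rule Bochner_Integration.integrable_bound[OF intc1P[of K]])
    show "AE y in q. norm (R y) \<le> norm (K * (1 + P y))"
      using Rb K0 Pnn by (intro AE_I2) (simp add: abs_mult)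
  qed simp
  have eR: "\<bar>measure_pmf.expectation q R\<bar> \<le> K * (1 + C)"
  proof -
    have "\<bar>measure_pmf.expectation q R\<bar> \<le> measure_pmf.expectation q (\<lambda>y. K * (1 + P y))"
      by (rule int_abs_le[OF intR intc1P Rb])
    also have "\<dots> = K * (1 + measure_pmf.expectation q P)" using intP by simp
    also have "\<dots> \<le> K * (1 + C)" using EP K0 by (intro mult_left_mono) auto
    finally show ?thesis .
  qed
  have feq: "(\<lambda>y. if \<bar>Y y - x\<bar> \<le> a then Y y powr r - x powr r else 0) =
     (\<lambda>y. r * (x * X2) * (d y * I y) + r*(r-1)/2 * X2 * ((d y)^2 * I y) + R y)"
    by (rule ext) (simp add: R_def I_def d_def X1)
  have Ef: "measure_pmf.expectation q (\<lambda>y. if \<bar>Y y - x\<bar> \<le> a then Y y powr r - x powr r else 0)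
     = r * (x * X2) * measure_pmf.expectation q (\<lambda>y. d y * I y)
       + r*(r-1)/2 * X2 * measure_pmf.expectation q (\<lambda>y. (d y)^2 * I y) + measure_pmf.expectation q R"
    unfolding feq using intdI intd2I intR by simp
  define m where "m = measure_pmf.expectation q d"
  define v where "v = measure_pmf.expectation q (\<lambda>y. (d y)^2)"
  define E1 where "E1 = measure_pmf.expectation q (\<lambda>y. d y - d y * I y)"
  define E2 where "E2 = measure_pmf.expectation q (\<lambda>y. (d y)^2 - (d y)^2 * I y)"
  define ER where "ER = measure_pmf.expectation q R"
  have A1: "measure_pmf.expectation q (\<lambda>y. d y * I y) = m - E1"
    unfolding m_def E1_def using intd intdI by simp
  have A2: "measure_pmf.expectation q (\<lambda>y. (d y)^2 * I y) = v - E2"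
    unfolding v_def E2_def using intd2 intd2I by simp
  have eq: "r * (x * X2) * (m - E1) + r*(r-1)/2 * X2 * (v - E2) + ER - r * X2 * (c + (r-1)/2 * s)
     = r * X2 * x * (m - c/x) - r * X2 * x * E1 + r*(r-1)/2 * X2 * (v - s) - r*(r-1)/2 * X2 * E2 + ER"
    using x by (simp add: field_simps)
  have b1: "\<bar>r * X2 * x * (m - c/x)\<bar> = \<bar>r\<bar> * X2 * (x * \<bar>m - c/x\<bar>)"
    using X2pos x by (simp add: abs_mult)
  have b2: "\<bar>r * X2 * x * E1\<bar> \<le> \<bar>r\<bar> * X2 * (x * a powr (1-p) * C)"
  proof -
    have "\<bar>r * X2 * x * E1\<bar> = \<bar>r\<bar> * X2 * x * \<bar>E1\<bar>" using X2pos x by (simp add: abs_mult)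
    also have "\<dots> \<le> \<bar>r\<bar> * X2 * x * (a powr (1-p) * C)"
      using e1 X2pos x unfolding E1_def by (intro mult_left_mono) auto
    finally show ?thesis by (simp add: mult.assoc)
  qed
  have b3: "\<bar>r*(r-1)/2 * X2 * (v - s)\<bar> = \<bar>r\<bar> * X2 * (\<bar>r-1\<bar>/2 * \<bar>v - s\<bar>)"
    using X2pos by (simp add: abs_mult)
  have b4: "\<bar>r*(r-1)/2 * X2 * E2\<bar> \<le> \<bar>r\<bar> * X2 * (\<bar>r-1\<bar>/2 * a powr (2-p) * C)"
  proof -
    have "\<bar>r*(r-1)/2 * X2 * E2\<bar> = \<bar>r\<bar> * X2 * (\<bar>r-1\<bar>/2) * \<bar>E2\<bar>" using X2pos by (simp add: abs_mult)
    also have "\<dots> \<le> \<bar>r\<bar> * X2 * (\<bar>r-1\<bar>/2) * (a powr (2-p) * C)"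
      using e2 X2pos unfolding E2_def by (intro mult_left_mono) auto
    finally show ?thesis by (simp add: mult.assoc)
  qed
  have b5: "\<bar>ER\<bar> \<le> \<bar>r\<bar> * X2 * (B * (1 + C) * (a/x))"
    using eR unfolding ER_def K_def by (simp add: field_simps)
  have fin: "\<bar>r * (x * X2) * (m - E1) + r*(r-1)/2 * X2 * (v - E2) + ER - r * X2 * (c + (r-1)/2 * s)\<bar>
     \<le> \<bar>r\<bar> * X2 * (x * \<bar>m - c/x\<bar> + x * a powr (1-p) * C + \<bar>r-1\<bar>/2 * \<bar>v - s\<bar>
       + \<bar>r-1\<bar>/2 * a powr (2-p) * C + B * (1 + C) * (a/x))"
  proof -
    have "\<bar>r * X2 * x * (m - c/x) - r * X2 * x * E1 + r*(r-1)/2 * X2 * (v - s) - r*(r-1)/2 * X2 * E2 + ER\<bar>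
       \<le> \<bar>r\<bar> * X2 * (x * \<bar>m - c/x\<bar>) + \<bar>r\<bar> * X2 * (x * a powr (1-p) * C)
         + \<bar>r\<bar> * X2 * (\<bar>r-1\<bar>/2 * \<bar>v - s\<bar>) + \<bar>r\<bar> * X2 * (\<bar>r-1\<bar>/2 * a powr (2-p) * C)
         + \<bar>r\<bar> * X2 * (B * (1 + C) * (a/x))"
    proof (rule order.trans[OF tri5])
    qed (use b1 b2 b3 b4 b5 in linarith)
    also have "\<dots> = \<bar>r\<bar> * X2 * (x * \<bar>m - c/x\<bar> + x * a powr (1-p) * C + \<bar>r-1\<bar>/2 * \<bar>v - s\<bar>
         + \<bar>r-1\<bar>/2 * a powr (2-p) * C + B * (1 + C) * (a/x))" by (simp add: algebra_simps)
    finally show ?thesis by (subst eq)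
  qed
  have h1: "measure_pmf.expectation q (\<lambda>y. Y y - x) = m" by (simp add: m_def d_def)
  have h2: "measure_pmf.expectation q (\<lambda>y. (Y y - x)^2) = v" by (simp add: v_def d_def)
  have h3: "x powr (r-2) = X2" by (simp add: X2_def)
  have h4: "\<bar>(r-1)*(r-2)\<bar>/6 * 2 powr \<bar>r-3\<bar> = B" by (simp add: B_def)
  show ?thesis unfolding h1 h2 h3 h4 Ef A1 A2 using fin[unfolded ER_def] .
qed


theorem lemma3p4:
  fixes \<Sigma> :: "(real \<times> 's::finite) set"
    and K :: "real \<times> 's \<Rightarrow> (real \<times> 's) pmf"
    and p Cp \<zeta> r :: real
    and c s2 :: "'s \<Rightarrow> real"
    and i :: 's
  assumes lf: "locally_finite_state_space \<Sigma>"
    and supp: "\<And>z. z \<in> \<Sigma> \<Longrightarrow> set_pmf (K z) \<subseteq> \<Sigma>"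
    and p: "p > 2"
    and moment: "\<And>x j. (x, j) \<in> \<Sigma> \<Longrightarrow>
        (\<integral>\<^sup>+ y. ennreal (\<bar>fst y - x\<bar> powr p) \<partial>measure_pmf (K (x, j))) \<le> ennreal Cp"
    and s2_nonneg: "\<And>j. s2 j \<ge> 0"
    and s2_nonzero: "\<exists>j. s2 j \<noteq> 0"
    and mu_asymp: "\<And>j \<epsilon>. \<epsilon> > 0 \<Longrightarrow>
        \<forall>\<^sub>F x in at_top. (x, j) \<in> \<Sigma> \<longrightarrow> \<bar>mu K j x - c j / x\<bar> \<le> \<epsilon> / x"
    and sigma_asymp: "\<And>j \<epsilon>. \<epsilon> > 0 \<Longrightarrow>
        \<forall>\<^sub>F x in at_top. (x, j) \<in> \<Sigma> \<longrightarrow> \<bar>sigma2 K j x - s2 j\<bar> \<le> \<epsilon>"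
    and zeta: "1 / (p - 1) < \<zeta>" "\<zeta> < 1"
  shows "\<forall>\<epsilon>>0. \<forall>\<^sub>F x in at_top. (x, i) \<in> \<Sigma> \<longrightarrow>
     \<bar>measure_pmf.expectation (K (x, i))
         (\<lambda>y. if \<bar>fst y - x\<bar> \<le> x powr \<zeta> then fst y powr r - x powr r else 0)
       - r * x powr (r - 2) * (c i + (r - 1) / 2 * s2 i)\<bar>
     \<le> \<epsilon> * \<bar>r\<bar> * x powr (r - 2)"
proof (intro allI impI)
  fix \<epsilon> :: real assume e: "\<epsilon> > 0"
  define e1 where "e1 = \<epsilon> / (2 + \<bar>r-1\<bar>)"
  have e1p: "e1 > 0" unfolding e1_def using e by simp
  have e1m: "e1 * (2 + \<bar>r-1\<bar>) = \<epsilon>" unfolding e1_def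
    by (smt (verit) nonzero_eq_divide_eq)
  have e1b: "e1 + \<bar>r-1\<bar>/2 * e1 = \<epsilon>/2"
  proof -
    have "e1 + \<bar>r-1\<bar>/2 * e1 = e1 * (2 + \<bar>r-1\<bar>) / 2" by (simp add: algebra_simps)
    thus ?thesis using e1m by simp
  qed
  define C where "C = max Cp 0"
  have C0: "C \<ge> 0" unfolding C_def by simp
  define B where "B = \<bar>(r-1)*(r-2)\<bar>/6 * 2 powr \<bar>r-3\<bar>"
  have p1: "p - 1 > 0" using p by simp
  have zp: "\<zeta> * (p-1) > 1" using zeta(1) p1 by (simp add: divide_less_eq mult.commute)
  have z0: "\<zeta> > 0" using zeta(1) p1 by (smt (verit) divide_pos_pos)
  define g where "g = (\<lambda>x::real. C * x powr (1 + \<zeta>*(1-p)) + \<bar>r-1\<bar>/2 * C * x powr (\<zeta>*(2-p))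
      + B * (1 + C) * x powr (\<zeta> - 1))"
  have fl: "filterlim (\<lambda>x::real. x) at_top at_top" by (rule filterlim_ident)
  have "(g \<longlongrightarrow> C * 0 + \<bar>r-1\<bar>/2 * C * 0 + B * (1 + C) * 0) at_top"
    unfolding g_def
    by (intro tendsto_intros tendsto_neg_powr[OF _ fl]) (use zp z0 p zeta in \<open>auto simp: algebra_simps\<close>)
  hence gl: "(g \<longlongrightarrow> 0) at_top" by simp
  have ev_g: "\<forall>\<^sub>F x in at_top. g x < \<epsilon>/2" using order_tendstoD(2)[OF gl, of "\<epsilon>/2"] e by linarith
  have zl: "((\<lambda>x::real. x powr (\<zeta> - 1)) \<longlongrightarrow> 0) at_top"
    by (rule tendsto_neg_powr[OF _ fl]) (use zeta in simp)
  have ev_z: "\<forall>\<^sub>F x in at_top. x powr (\<zeta> - 1) < 1/2" using order_tendstoD(2)[OF zl, of "1/2"] by linarith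
  show "\<forall>\<^sub>F x in at_top. (x, i) \<in> \<Sigma> \<longrightarrow>
     \<bar>measure_pmf.expectation (K (x, i))
         (\<lambda>y. if \<bar>fst y - x\<bar> \<le> x powr \<zeta> then fst y powr r - x powr r else 0)
       - r * x powr (r - 2) * (c i + (r - 1) / 2 * s2 i)\<bar>
     \<le> \<epsilon> * \<bar>r\<bar> * x powr (r - 2)"
    using ev_g ev_z eventually_gt_at_top[of 0] mu_asymp[OF e1p, of i] sigma_asymp[OF e1p, of i]
  proof eventually_elim
    case (elim x)
    show ?case
    proof
      assume xin: "(x, i) \<in> \<Sigma>"
      have x: "x > 0" using elim by simp
      define a where "a = x powr \<zeta>"
      have a0: "a > 0" unfolding a_def using x by simp
      have ax: "a \<le> x/2"
      proof -
        have "x powr (\<zeta> - 1) = a / x" unfolding a_def using x by (simp add: powr_diff)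
        thus ?thesis using elim x by (simp add: divide_less_eq)
      qed
      let ?q = "K (x, i)"
      have nn: "(\<integral>\<^sup>+ y. ennreal (\<bar>fst y - x\<bar> powr p) \<partial>measure_pmf ?q) \<le> ennreal Cp"
        by (rule moment[OF xin])
      have intp: "integrable ?q (\<lambda>y. \<bar>fst y - x\<bar> powr p)"
      proof (rule integrableI_nonneg)
        show "(\<integral>\<^sup>+ y. ennreal (\<bar>fst y - x\<bar> powr p) \<partial>measure_pmf ?q) < \<infinity>"
          using nn by (simp add: le_less_trans)
      qed auto
      have "ennreal (measure_pmf.expectation ?q (\<lambda>y. \<bar>fst y - x\<bar> powr p)) \<le> ennreal C"
        using nn nn_integral_eq_integral[OF intp] unfolding C_def
        by (metis (no_types, lifting) AE_I2 ennreal_leI max.cobounded1 order_trans powr_ge_zero)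
      hence bnd: "measure_pmf.expectation ?q (\<lambda>y. \<bar>fst y - x\<bar> powr p) \<le> C"
        using C0 by (simp add: ennreal_le_iff)
      note cr = core[OF x a0 ax p intp bnd, of r "c i" "s2 i"]
      have m1: "x * \<bar>measure_pmf.expectation ?q (\<lambda>y. fst y - x) - c i / x\<bar> \<le> e1"
        using elim xin x unfolding mu_def by (simp add: field_simps)
      have m2: "\<bar>measure_pmf.expectation ?q (\<lambda>y. (fst y - x)^2) - s2 i\<bar> \<le> e1"
        using elim xin unfolding sigma2_def by simp
      have gx: "x * a powr (1-p) * C + \<bar>r-1\<bar>/2 * a powr (2-p) * C + B * (1 + C) * (a/x) = g x"
      proof -
        have "x * a powr (1-p) = x powr (1 + \<zeta>*(1-p))" unfolding a_def using x
          by (simp add: powr_powr powr_add)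
        moreover have "a powr (2-p) = x powr (\<zeta>*(2-p))" unfolding a_def by (simp add: powr_powr)
        moreover have "a / x = x powr (\<zeta> - 1)" unfolding a_def using x by (simp add: powr_diff)
        ultimately show ?thesis unfolding g_def by (simp add: algebra_simps)
      qed
      have br: "x * \<bar>measure_pmf.expectation ?q (\<lambda>y. fst y - x) - c i / x\<bar>
        + x * a powr (1-p) * C + \<bar>r-1\<bar>/2 * \<bar>measure_pmf.expectation ?q (\<lambda>y. (fst y - x)^2) - s2 i\<bar>
        + \<bar>r-1\<bar>/2 * a powr (2-p) * C + B * (1 + C) * (a/x) \<le> \<epsilon>"
      proof -
        have "\<bar>r-1\<bar>/2 * \<bar>measure_pmf.expectation ?q (\<lambda>y. (fst y - x)^2) - s2 i\<bar> \<le> \<bar>r-1\<bar>/2 * e1"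
          using m2 by (intro mult_left_mono) auto
        thus ?thesis using m1 gx elim e1b by linarith
      qed
      have "\<bar>r\<bar> * x powr (r-2) * (x * \<bar>measure_pmf.expectation ?q (\<lambda>y. fst y - x) - c i / x\<bar>
        + x * a powr (1-p) * C + \<bar>r-1\<bar>/2 * \<bar>measure_pmf.expectation ?q (\<lambda>y. (fst y - x)^2) - s2 i\<bar>
        + \<bar>r-1\<bar>/2 * a powr (2-p) * C + B * (1 + C) * (a/x)) \<le> \<bar>r\<bar> * x powr (r-2) * \<epsilon>"
        using br by (intro mult_left_mono) auto
      thus "\<bar>measure_pmf.expectation ?q
         (\<lambda>y. if \<bar>fst y - x\<bar> \<le> x powr \<zeta> then fst y powr r - x powr r else 0)
       - r * x powr (r - 2) * (c i + (r - 1) / 2 * s2 i)\<bar>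
        \<le> \<epsilon> * \<bar>r\<bar> * x powr (r - 2)"
        using cr unfolding a_def B_def by (simp add: mult_ac)
    qed
  qed
qed

end
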